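(* Let $f\ge1$ and $k\ge 3$ be integers and consider the asynchronous Bullshark protocol with $n=kf+1$ validators as described in the context. If a validator $p_i$ directly commits a steady-state leader in wave $w$, then no honest validator commits (directly or indirectly) a fallback leader in wave $w$; and symmetrically, if a validator $p_i$ directly commits a fallback leader in wave $w$, then no honest validator commits (directly or indirectly) a steady-state leader in wave $w$.
   Context: Setting: $n=kf+1$ validators, at most $f$ Byzantine. All local DAGs are subsets of one common set of vertices; each vertex has a round and a source validator, and for each validator and round there is at most one vertex (no equivocation). Each validator $p_i$ keeps a local DAG $DAG_i$ closed under edges; $DAG_i[r]$ is its set of round-$r$ vertices; a path is a sequence of contiguous edges. Waves have 4 rounds, $\mathit{round}(w,j)=4(w-1)+j$. Each wave $w$ has a first steady-state leader vertex in $\mathit{round}(w,1)$, a second steady-state leader vertex in $\mathit{round}(w,3)$ (both predetermined) and a fallback leader vertex in $\mathit{round}(w,1)$ (selected by a shared coin at the end of the wave). Voting types: for each wave $w$, each validator $p_j$ whose $\mathit{round}(w,1)$ vertex exists has a voting type in $w$, either steady-state or fallback, which is a deterministic function of that vertex and its causal history; hence every validator that has $p_j$'s $\mathit{round}(w,1)$ vertex in its DAG assigns $p_j$ the same type for $w$, and all of $p_j$'s vertices in wave $w$ carry that type. A vertex votes for a leader if it has a path to it; steady-state leaders of rounds $\mathit{round}(w,1)$ and $\mathit{round}(w,3)$ are voted on by vertices of rounds $\mathit{round}(w,2)$ and $\mathit{round}(w,4)$ respectively, and the fallback leader by vertices of $\mathit{round}(w,4)$. Direct commit: $p_i$ directly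 commits a leader of wave $w$ if at least $(k-1)f+1$ vertices of the corresponding voting round in $DAG_i$ have a path to it and have the leader's type (steady-state for steady-state leaders, fallback for the fallback leader). Indirect commit: when traversing back from a directly committed vertex, a validator computes, for a candidate leader, the votes as the vertices of its voting round that are reachable from the committed vertex and have a path to the candidate; it commits a leader only if that leader has at least $(k-2)f+1$ votes of its own type while the leader of the other type has at most $f$ votes of that other type. *)

theory Defs
  imports Main
begin

definition wround :: "nat \<Rightarrow> nat \<Rightarrow> nat" where
  "wround w j = 4 * (w - 1) + j"

text \<open>The three leaders of a wave: first steady-state, second steady-state, fallback.\<close>
datatype lkind = SS1 | SS2 | FB

definition is_steady :: "lkind \<Rightarrow> bool" where
  "is_steady K = (K \<noteq> FB)"

fun leader_round :: "lkind \<Rightarrow> nat \<Rightarrow> nat" where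
  "leader_round SS1 w = wround w 1"
| "leader_round SS2 w = wround w 3"
| "leader_round FB w = wround w 1"

fun vote_round :: "lkind \<Rightarrow> nat \<Rightarrow> nat" where
  "vote_round SS1 w = wround w 2"
| "vote_round SS2 w = wround w 4"
| "vote_round FB w = wround w 4"

text \<open>Parameters used below:
  rnd :: vertex => round, src :: vertex => source validator,
  E v u : v has an edge to u, DAG i : local DAG of validator i,
  stype w j : validator j has steady-state voting type in wave w (False = fallback),
  ldr K w : the leader vertex of kind K in wave w.
  A path is a nonempty sequence of contiguous edges, i.e. the transitive closure of E.\<close>

definition direct_votes ::
  "('x \<Rightarrow> nat) \<Rightarrow> ('x \<Rightarrow> nat) \<Rightarrow> ('x \<Rightarrow> 'x \<Rightarrow> bool) \<Rightarrow> 'x set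
   \<Rightarrow> (nat \<Rightarrow> nat \<Rightarrow> bool) \<Rightarrow> (lkind \<Rightarrow> nat \<Rightarrow> 'x) \<Rightarrow> lkind \<Rightarrow> nat \<Rightarrow> 'x set" where
  "direct_votes rnd src E D stype ldr K w =
     {v \<in> D. rnd v = vote_round K w \<and> E\<^sup>+\<^sup>+ v (ldr K w)
            \<and> stype w (src v) = is_steady K}"

definition direct_commit ::
  "nat \<Rightarrow> nat \<Rightarrow> ('x \<Rightarrow> nat) \<Rightarrow> ('x \<Rightarrow> nat) \<Rightarrow> ('x \<Rightarrow> 'x \<Rightarrow> bool) \<Rightarrow> 'x set
   \<Rightarrow> (nat \<Rightarrow> nat \<Rightarrow> bool) \<Rightarrow> (lkind \<Rightarrow> nat \<Rightarrow> 'x) \<Rightarrow> lkind \<Rightarrow> nat \<Rightarrow> bool" where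
  "direct_commit k f rnd src E D stype ldr K w =
     (card (direct_votes rnd src E D stype ldr K w) \<ge> (k - 1) * f + 1)"

definition anchored_votes ::
  "('x \<Rightarrow> nat) \<Rightarrow> ('x \<Rightarrow> nat) \<Rightarrow> ('x \<Rightarrow> 'x \<Rightarrow> bool) \<Rightarrow> 'x set
   \<Rightarrow> (nat \<Rightarrow> nat \<Rightarrow> bool) \<Rightarrow> (lkind \<Rightarrow> nat \<Rightarrow> 'x) \<Rightarrow> 'x \<Rightarrow> lkind \<Rightarrow> nat \<Rightarrow> 'x set" where
  "anchored_votes rnd src E D stype ldr a K w =
     {v \<in> D. rnd v = vote_round K w \<and> E\<^sup>+\<^sup>+ a v \<and> E\<^sup>+\<^sup>+ v (ldr K w)
            \<and> stype w (src v) = is_steady K}"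

definition indirect_cond ::
  "nat \<Rightarrow> nat \<Rightarrow> ('x \<Rightarrow> nat) \<Rightarrow> ('x \<Rightarrow> nat) \<Rightarrow> ('x \<Rightarrow> 'x \<Rightarrow> bool) \<Rightarrow> 'x set
   \<Rightarrow> (nat \<Rightarrow> nat \<Rightarrow> bool) \<Rightarrow> (lkind \<Rightarrow> nat \<Rightarrow> 'x) \<Rightarrow> 'x \<Rightarrow> lkind \<Rightarrow> nat \<Rightarrow> bool" where
  "indirect_cond k f rnd src E D stype ldr a K w =
     (card (anchored_votes rnd src E D stype ldr a K w) \<ge> (k - 2) * f + 1 \<and>
      (\<forall>K'. is_steady K' \<noteq> is_steady K \<longrightarrow>
            card (anchored_votes rnd src E D stype ldr a K' w) \<le> f))"

inductive committed ::
  "nat \<Rightarrow> nat \<Rightarrow> ('x \<Rightarrow> nat) \<Rightarrow> ('x \<Rightarrow> nat) \<Rightarrow> ('x \<Rightarrow> 'x \<Rightarrow> bool) \<Rightarrow> 'x set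
   \<Rightarrow> (nat \<Rightarrow> nat \<Rightarrow> bool) \<Rightarrow> (lkind \<Rightarrow> nat \<Rightarrow> 'x) \<Rightarrow> lkind \<Rightarrow> nat \<Rightarrow> bool"
  for k f rnd src E D stype ldr where
  direct: "w \<ge> 1 \<Longrightarrow> direct_commit k f rnd src E D stype ldr K w
           \<Longrightarrow> committed k f rnd src E D stype ldr K w"
| indirect: "committed k f rnd src E D stype ldr K' w' \<Longrightarrow> w \<ge> 1
           \<Longrightarrow> leader_round K w < leader_round K' w'
           \<Longrightarrow> indirect_cond k f rnd src E D stype ldr (ldr K' w') K w
           \<Longrightarrow> committed k f rnd src E D stype ldr K w"

end

theory Submission
  imports Defs
begin

lemma two_sets_card:
  fixes A B :: "'x set" and src rnd :: "'x \<Rightarrow> nat"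
  assumes AV: "A \<subseteq> V" and BV: "B \<subseteq> V"
    and rA: "\<forall>v\<in>A. rnd v = r1" and rB: "\<forall>v\<in>B. rnd v = r2"
    and tA: "\<forall>v\<in>A. stype w (src v)" and tB: "\<forall>v\<in>B. \<not> stype w (src v)"
    and src_range: "\<forall>v\<in>V. src v < n"
    and no_equiv: "\<forall>u\<in>V. \<forall>v\<in>V. rnd u = rnd v \<and> src u = src v \<longrightarrow> u = v"
  shows "card A + card B \<le> n"
proof -
  have iA: "inj_on src A" using AV rA no_equiv unfolding inj_on_def by (metis subsetD)
  have iB: "inj_on src B" using BV rB no_equiv unfolding inj_on_def by (metis subsetD)
  have sub: "src ` A \<union> src ` B \<subseteq> {..<n}" using AV BV src_range by auto
  have fA: "finite (src ` A)" "finite (src ` B)" using sub finite_subset by auto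
  have disj: "src ` A \<inter> src ` B = {}" using tA tB by auto
  have "card A + card B = card (src ` A) + card (src ` B)"
    using iA iB by (simp add: card_image)
  also have "\<dots> = card (src ` A \<union> src ` B)" using fA disj by (simp add: card_Un_disjoint)
  also have "\<dots> \<le> card {..<n}" using sub by (intro card_mono) auto
  finally show ?thesis by simp
qed

lemma committed_votes:
  assumes "committed k f rnd src E D stype ldr K w"
  shows "\<exists>A \<subseteq> D. card A \<ge> (k - 2) * f + 1 \<and>
           (\<forall>v\<in>A. rnd v = vote_round K w \<and> stype w (src v) = is_steady K)"
  using assms
proof cases
  case direct
  have "(k - 2) * f \<le> (k - 1) * f" by (intro mult_le_mono1) auto
  moreover have "card (direct_votes rnd src E D stype ldr K w) \<ge> (k - 1) * f + 1"
    using direct unfolding direct_commit_def by simp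
  ultimately have "card (direct_votes rnd src E D stype ldr K w) \<ge> (k - 2) * f + 1" by linarith
  then show ?thesis
    by (intro exI[of _ "direct_votes rnd src E D stype ldr K w"])
       (auto simp: direct_votes_def)
next
  case (indirect K' w')
  then show ?thesis
    unfolding indirect_cond_def
    by (intro exI[of _ "anchored_votes rnd src E D stype ldr (ldr K' w') K w"])
       (auto simp: anchored_votes_def)
qed

lemma arith_contra:
  fixes k f :: nat
  assumes "f \<ge> 1" "k \<ge> 3" "(k - 1) * f + 1 + ((k - 2) * f + 1) \<le> k * f + 1"
  shows False
proof -
  obtain m where m: "k = m + 3" using assms(2) by (metis add.commute le_Suc_ex)
  show False using assms(1,3) unfolding m by (simp add: algebra_simps)
qed

theorem claim1:
  fixes f k n :: nat
    and V :: "'x set"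
    and rnd src :: "'x \<Rightarrow> nat"
    and E :: "'x \<Rightarrow> 'x \<Rightarrow> bool"
    and DAG :: "nat \<Rightarrow> 'x set"
    and stype :: "nat \<Rightarrow> nat \<Rightarrow> bool"
    and ldr :: "lkind \<Rightarrow> nat \<Rightarrow> 'x"
    and honest :: "nat \<Rightarrow> bool"
    and i w :: nat
  assumes hf: "f \<ge> 1" and hk: "k \<ge> 3" and hn: "n = k * f + 1"
    and byz: "card {j. j < n \<and> \<not> honest j} \<le> f"
    and src_range: "\<forall>v\<in>V. src v < n"
    and no_equiv: "\<forall>u\<in>V. \<forall>v\<in>V. rnd u = rnd v \<and> src u = src v \<longrightarrow> u = v"
    and dag_sub: "\<forall>j<n. DAG j \<subseteq> V"
    and dag_closed: "\<forall>j<n. \<forall>v u. v \<in> DAG j \<and> E v u \<longrightarrow> u \<in> DAG j"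
    and ldr_round: "\<forall>K w'. w' \<ge> 1 \<longrightarrow> rnd (ldr K w') = leader_round K w'"
    and hi: "i < n" and hw: "w \<ge> 1"
  shows "((direct_commit k f rnd src E (DAG i) stype ldr SS1 w \<or>
           direct_commit k f rnd src E (DAG i) stype ldr SS2 w) \<longrightarrow>
          (\<forall>j<n. honest j \<longrightarrow> \<not> committed k f rnd src E (DAG j) stype ldr FB w))
       \<and> (direct_commit k f rnd src E (DAG i) stype ldr FB w \<longrightarrow>
          (\<forall>j<n. honest j \<longrightarrow>
             \<not> committed k f rnd src E (DAG j) stype ldr SS1 w \<and>
             \<not> committed k f rnd src E (DAG j) stype ldr SS2 w))"
proof -
  have main: False
    if dc: "direct_commit k f rnd src E (DAG i) stype ldr K w"
      and cm: "committed k f rnd src E (DAG j) stype ldr K' w"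
      and ty: "is_steady K' \<noteq> is_steady K" and j: "j < n" for K K' j
  proof -
    define A where "A = direct_votes rnd src E (DAG i) stype ldr K w"
    have cA: "card A \<ge> (k - 1) * f + 1" using dc unfolding A_def direct_commit_def .
    have AV: "A \<subseteq> V" using dag_sub hi unfolding A_def direct_votes_def by auto
    obtain B where B: "B \<subseteq> DAG j" "card B \<ge> (k - 2) * f + 1"
      "\<forall>v\<in>B. rnd v = vote_round K' w \<and> stype w (src v) = is_steady K'"
      using committed_votes[OF cm] by blast
    have BV: "B \<subseteq> V" using B(1) dag_sub j by auto
    have rA: "\<forall>v\<in>A. rnd v = vote_round K w \<and> stype w (src v) = is_steady K"
      unfolding A_def direct_votes_def by auto
    have "card A + card B \<le> n"
    proof (cases "is_steady K")
      case True
      then show ?thesis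
        using two_sets_card[OF AV BV _ _ _ _ src_range no_equiv, of "vote_round K w" "vote_round K' w" stype w]
          rA B(3) ty by auto
    next
      case False
      then show ?thesis
        using two_sets_card[OF BV AV _ _ _ _ src_range no_equiv, of "vote_round K' w" "vote_round K w" stype w]
          rA B(3) ty by auto
    qed
    then show False using arith_contra[OF hf hk] cA B(2) hn by linarith
  qed
  show ?thesis
    by (auto simp: is_steady_def dest: main)
qed

end
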